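(* Let $\mathcal{P}$ be an arbitrary set of prime numbers (finite or infinite), and let $\langle \mathcal{P} \rangle \subset \mathbb{N} = \{1,2,3,\ldots\}$ denote the set of natural numbers all of whose prime factors lie in $\mathcal{P}$ (in particular $1 \in \langle \mathcal{P}\rangle$). Then for every real number $x$, $$\Big|\sum_{n \in \langle \mathcal{P} \rangle:\, n \leq x} \frac{\mu(n)}{n}\Big| \leq 1.$$
   Context: $\mu$ denotes the Möbius function: $\mu(n) = (-1)^k$ if $n$ is a product of $k$ distinct primes, and $\mu(n)=0$ otherwise. $\langle \mathcal{P}\rangle$ is the multiplicative semigroup generated by $\mathcal{P}$ (including $1$ as the empty product). *)

theory Defs
  imports "HOL-Computational_Algebra.Computational_Algebra"
begin

definition moebius :: "nat \<Rightarrow> int" where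
  "moebius n = (if n > 0 \<and> squarefree n then (-1) ^ card (prime_factors n) else 0)"

definition gen_semigroup :: "nat set \<Rightarrow> nat set" where
  "gen_semigroup P = {n. n > 0 \<and> prime_factors n \<subseteq> P}"

end

theory Submission
  imports Defs
begin

lemma sf_prod:
  fixes S :: "nat set"
  assumes "finite S" "\<forall>p\<in>S. prime p"
  shows "prime_factors (\<Prod>S) = S \<and> squarefree (\<Prod>S) \<and> \<Prod>S > 0"
proof (intro conjI)
  have "0 \<notin> id ` S" using assms(2) by auto
  then show "prime_factors (\<Prod>S) = S"
    using prime_factors_prod[OF assms(1), of id] assms(2) by (auto simp: prime_prime_factors)
  show "squarefree (\<Prod>S)"
    using squarefree_prod_coprime[of S id] assms(2) by (auto simp: primes_coprime squarefree_prime)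
  show "\<Prod>S > 0" using assms(2) by (simp add: prime_gt_0_nat prod_pos)
qed

lemma sf_eq:
  fixes n :: nat
  assumes "squarefree n"
  shows "n = \<Prod>(prime_factors n)"
proof -
  have n0: "n > 0" using assms by (cases n) auto
  have "n = (\<Prod>p \<in> prime_factors n. p ^ multiplicity p n)"
    using prime_factorization_nat[OF n0] .
  also have "\<dots> = (\<Prod>p \<in> prime_factors n. p)"
    using assms n0 by (intro prod.cong) (auto simp: squarefree_factorial_semiring')
  finally show ?thesis by simp
qed

lemma pf_prod_dvd:
  fixes m :: nat
  assumes "m > 0"
  shows "\<Prod>(prime_factors m) dvd m"
proof -
  have "\<Prod>(prime_factors m) dvd (\<Prod>p \<in> prime_factors m. p ^ multiplicity p m)"
    by (intro prod_dvd_prod) (auto simp: prime_factors_multiplicity)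
  then show ?thesis using prime_factorization_nat[OF assms] by simp
qed

lemma core:
  fixes m :: nat
  assumes m0: "m > 0"
  shows "(\<Sum>n | n dvd m \<and> prime_factors n \<subseteq> P. moebius n) =
         (if prime_factors m \<inter> P = {} then 1 else 0)"
proof -
  define T where "T = prime_factors m \<inter> P"
  have fT: "finite T" unfolding T_def by auto
  have pT: "\<forall>p\<in>S. prime p" if "S \<subseteq> T" for S using that unfolding T_def by auto
  have fin: "finite {n. n dvd m \<and> prime_factors n \<subseteq> P}"
    by (rule finite_subset[of _ "{..m}"]) (auto simp: dvd_imp_le m0)
  have sub: "(\<lambda>S. \<Prod>S) ` Pow T \<subseteq> {n. n dvd m \<and> prime_factors n \<subseteq> P}"
  proof
    fix n assume "n \<in> (\<lambda>S. \<Prod>S) ` Pow T"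
    then obtain S where S: "S \<subseteq> T" "n = \<Prod>S" by auto
    have fS: "finite S" using S fT finite_subset by blast
    have "\<Prod>S dvd \<Prod>(prime_factors m)"
      using S unfolding T_def by (intro prod_dvd_prod_subset) auto
    then have "n dvd m" using S pf_prod_dvd[OF m0] dvd_trans by blast
    moreover have "prime_factors n \<subseteq> P" using sf_prod[OF fS pT[OF S(1)]] S unfolding T_def by auto
    ultimately show "n \<in> {n. n dvd m \<and> prime_factors n \<subseteq> P}" by simp
  qed
  have zero: "moebius n = 0" if "n \<in> {n. n dvd m \<and> prime_factors n \<subseteq> P} - (\<lambda>S. \<Prod>S) ` Pow T" for n
  proof (rule ccontr)
    assume "moebius n \<noteq> 0"
    then have sq: "squarefree n" by (auto simp: moebius_def split: if_splits)
    have "prime_factors n \<subseteq> T" using that m0 dvd_prime_factors[of m n] unfolding T_def by auto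
    then have "n \<in> (\<lambda>S. \<Prod>S) ` Pow T" using sf_eq[OF sq] by auto
    then show False using that by auto
  qed
  have "(\<Sum>n | n dvd m \<and> prime_factors n \<subseteq> P. moebius n) = (\<Sum>n \<in> (\<lambda>S. \<Prod>S) ` Pow T. moebius n)"
    using fin sub zero by (intro sum.mono_neutral_right) auto
  also have "\<dots> = (\<Sum>S \<in> Pow T. moebius (\<Prod>S))"
  proof (rule sum.reindex_cong[OF _ refl refl])
    show "inj_on (\<lambda>S. \<Prod>S) (Pow T)"
    proof (rule inj_onI)
      fix S1 S2 assume "S1 \<in> Pow T" "S2 \<in> Pow T" "\<Prod>S1 = \<Prod>S2"
      then show "S1 = S2" using sf_prod[of S1] sf_prod[of S2] pT fT finite_subset
        by (metis PowD)
    qed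
  qed
  also have "\<dots> = (\<Sum>S \<in> Pow T. (-1) ^ card S)"
  proof (rule sum.cong[OF refl])
    fix S assume "S \<in> Pow T"
    then have "S \<subseteq> T" by auto
    then have "finite S" using fT finite_subset by blast
    then show "moebius (\<Prod>S) = (-1) ^ card S"
      using sf_prod[OF _ pT[OF \<open>S \<subseteq> T\<close>]] by (auto simp: moebius_def)
  qed
  also have "\<dots> = (\<Prod>x\<in>T. (1::int) - 1)"
    by (subst prod_diff_conv_sum[OF fT]) simp
  also have "\<dots> = (if T = {} then 1 else 0)"
    using fT by (simp add: prod_zero_iff card_gt_0_iff)
  finally show ?thesis unfolding T_def .
qed

lemma card_mult:
  fixes n N :: nat
  assumes "n > 0"
  shows "card {m\<in>{1..N}. n dvd m} = N div n"
proof -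
  have "{m\<in>{1..N}. n dvd m} = (\<lambda>k. n*k) ` {1..N div n}"
  proof (rule set_eqI, rule iffI)
    fix m assume "m \<in> {m\<in>{1..N}. n dvd m}"
    then obtain k where k: "m = n*k" "1 \<le> n*k" "n*k \<le> N" by (auto elim!: dvdE)
    then have "k \<ge> 1" by (cases k) auto
    moreover have "k \<le> N div n" using div_le_mono[OF k(3), of n] assms by simp
    ultimately have "k \<in> {1..N div n}" by simp
    then show "m \<in> (\<lambda>k. n*k) ` {1..N div n}" unfolding k(1) by (rule imageI)
  next
    fix m assume "m \<in> (\<lambda>k. n*k) ` {1..N div n}"
    then obtain k where k0: "k \<in> {1..N div n}" "m = n*k" by (rule imageE) simp
    then have k: "m = n*k" "1 \<le> k" "k \<le> N div n" by auto
    then have "n*k \<le> n*(N div n)" by simp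
    moreover have "n*(N div n) \<le> N" using mult_div_mod_eq[of n N] by linarith
    ultimately have "n*k \<le> N" by linarith
    moreover have "1 \<le> n*k" using k assms by simp
    ultimately show "m \<in> {m\<in>{1..N}. n dvd m}" using k by auto
  qed
  moreover have "inj_on (\<lambda>k. n*k) {1..N div n}" using assms by (auto intro: inj_onI)
  ultimately show ?thesis by (simp add: card_image)
qed

lemma identity:
  fixes N :: nat and P :: "nat set"
  defines "B \<equiv> {n\<in>{1..N}. prime_factors n \<subseteq> P}"
  shows "(\<Sum>n\<in>B. moebius n * int (N div n)) = int (card {m\<in>{1..N}. prime_factors m \<inter> P = {}})"
proof -
  have fB: "finite B" unfolding B_def by auto
  have "(\<Sum>n\<in>B. moebius n * int (N div n)) = (\<Sum>n\<in>B. \<Sum>m\<in>{1..N}. if n dvd m then moebius n else 0)"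
  proof (rule sum.cong[OF refl])
    fix n assume "n \<in> B"
    then have "n > 0" unfolding B_def by auto
    have "(\<Sum>m\<in>{1..N}. if n dvd m then moebius n else 0) = (\<Sum>m\<in>{m\<in>{1..N}. n dvd m}. moebius n)"
      by (rule sum.inter_filter[symmetric]) simp
    also have "\<dots> = moebius n * int (N div n)" using card_mult[OF \<open>n>0\<close>, of N] by simp
    finally show "moebius n * int (N div n) = (\<Sum>m\<in>{1..N}. if n dvd m then moebius n else 0)" by simp
  qed
  also have "\<dots> = (\<Sum>m\<in>{1..N}. \<Sum>n\<in>B. if n dvd m then moebius n else 0)"
    by (rule sum.swap)
  also have "\<dots> = (\<Sum>m\<in>{1..N}. if prime_factors m \<inter> P = {} then 1 else 0)"
  proof (rule sum.cong[OF refl])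
    fix m assume m: "m \<in> {1..N}"
    have "(\<Sum>n\<in>B. if n dvd m then moebius n else 0) = (\<Sum>n\<in>{n\<in>B. n dvd m}. moebius n)"
      using fB by (rule sum.inter_filter[symmetric])
    also have "{n\<in>B. n dvd m} = {n. n dvd m \<and> prime_factors n \<subseteq> P}"
    proof (rule set_eqI)
      fix n
      have "1 \<le> n \<and> n \<le> N" if d: "n dvd m"
      proof -
        have "n \<le> m" using m d by (intro dvd_imp_le) auto
        moreover have "n \<noteq> 0" using d m by (intro notI) simp
        ultimately show ?thesis using m by simp
      qed
      then show "n \<in> {n\<in>B. n dvd m} \<longleftrightarrow> n \<in> {n. n dvd m \<and> prime_factors n \<subseteq> P}"
        unfolding B_def by auto
    qed
    also have "(\<Sum>n | n dvd m \<and> prime_factors n \<subseteq> P. moebius n) = (if prime_factors m \<inter> P = {} then 1 else 0)"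
      using m by (intro core) auto
    finally show "(\<Sum>n\<in>B. if n dvd m then moebius n else 0) = (if prime_factors m \<inter> P = {} then 1 else 0)" .
  qed
  also have "\<dots> = (\<Sum>m\<in>{m\<in>{1..N}. prime_factors m \<inter> P = {}}. 1)"
    by (rule sum.inter_filter[symmetric]) simp
  also have "\<dots> = int (card {m\<in>{1..N}. prime_factors m \<inter> P = {}})"
    by simp
  finally show ?thesis .
qed

theorem theorem1p1:
  fixes P :: "nat set" and x :: real
  assumes "\<forall>p\<in>P. prime p"
  shows "\<bar>\<Sum>n\<in>{n \<in> gen_semigroup P. real n \<le> x}. real_of_int (moebius n) / real n\<bar> \<le> 1"
proof (cases "x < 1")
  case True
  have h: "real n \<ge> 1" if "n \<in> gen_semigroup P" for n
    using that by (auto simp: gen_semigroup_def)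
  have E: "{n \<in> gen_semigroup P. real n \<le> x} = {}"
  proof (intro equalityI subsetI)
    fix n assume "n \<in> {n \<in> gen_semigroup P. real n \<le> x}"
    then have "real n \<le> x" "real n \<ge> 1" using h by auto
    then show "n \<in> {}" using True by linarith
  qed simp
  show ?thesis unfolding E by simp
next
  case False
  then have x1: "x \<ge> 1" by simp
  define N where "N = nat \<lfloor>x\<rfloor>"
  have Nx: "real N \<le> x" "x < real N + 1" using x1 unfolding N_def by linarith+
  have N1: "N \<ge> 1" using x1 unfolding N_def by linarith
  define B where "B = {n\<in>{1..N}. prime_factors n \<subseteq> P}"
  have Beq: "{n \<in> gen_semigroup P. real n \<le> x} = B"
  proof -
    have "real n \<le> x \<longleftrightarrow> n \<le> N" for n
    proof
      assume "real n \<le> x" then show "n \<le> N" unfolding N_def by (rule le_nat_floor)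
    next
      assume "n \<le> N" then have "real n \<le> real N" by simp
      then show "real n \<le> x" using Nx by linarith
    qed
    then show ?thesis unfolding B_def gen_semigroup_def by auto
  qed
  have fB: "finite B" unfolding B_def by auto
  define A where "A = card {m\<in>{1..N}. prime_factors m \<inter> P = {}}"
  define mu where "mu n = real_of_int (moebius n)" for n
  define r where "r n = x / real n - real (N div n)" for n
  have r_bounds: "0 \<le> r n \<and> r n < 1" if "n \<in> B" for n
  proof -
    have n0: "n > 0" using that unfolding B_def by auto
    have e: "N = n * (N div n) + N mod n" by simp
    have "N mod n < n" using n0 by simp
    have "n * (N div n) \<le> N" using e by linarith
    then have "real (n * (N div n)) \<le> real N" by (simp only: of_nat_le_iff)
    then have a: "real n * real (N div n) \<le> x" using Nx by simp
    have "N + 1 \<le> n * (N div n) + n" using e \<open>N mod n < n\<close> by linarith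
    then have "real (N + 1) \<le> real (n * (N div n) + n)" by (simp only: of_nat_le_iff)
    then have "real N + 1 \<le> real n * real (N div n) + real n" by simp
    then have b: "x < real n * (real (N div n) + 1)" using Nx by (simp add: algebra_simps)
    have np: "real n > 0" using n0 by simp
    have "real (N div n) \<le> x / real n" using a np by (simp add: pos_le_divide_eq mult.commute)
    moreover have "x / real n < real (N div n) + 1" using b np by (simp add: pos_divide_less_eq mult.commute)
    ultimately show ?thesis unfolding r_def by linarith
  qed
  have mu_b: "\<bar>mu n\<bar> \<le> 1" for n unfolding mu_def moebius_def by auto
  have mu1: "mu 1 = 1" unfolding mu_def moebius_def by simp
  have oneB: "1 \<in> B" unfolding B_def using N1 by auto
  define B' where "B' = B - {1}"
  have id: "(\<Sum>n\<in>B. mu n * real (N div n)) = real A"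
    using arg_cong[OF identity[of N P], of real_of_int] unfolding mu_def A_def B_def
    by (simp add: of_int_sum)
  have "x * (\<Sum>n\<in>B. mu n / real n) = (\<Sum>n\<in>B. mu n * (x / real n))"
    by (simp add: sum_distrib_left mult.commute)
  also have "\<dots> = (\<Sum>n\<in>B. mu n * real (N div n)) + (\<Sum>n\<in>B. mu n * r n)"
    unfolding sum.distrib[symmetric] r_def by (intro sum.cong) (simp_all add: algebra_simps)
  also have "(\<Sum>n\<in>B. mu n * r n) = r 1 + (\<Sum>n\<in>B'. mu n * r n)"
    unfolding B'_def using fB oneB mu1 by (simp add: sum.remove)
  finally have main: "x * (\<Sum>n\<in>B. mu n / real n) = real A + r 1 + (\<Sum>n\<in>B'. mu n * r n)"
    using id by simp
  have fB': "finite B'" using fB B'_def by auto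
  have term_b: "\<bar>mu n * r n\<bar> \<le> 1" if "n \<in> B'" for n
  proof -
    have "n \<in> B" using that B'_def by auto
    then have "\<bar>r n\<bar> \<le> 1" using r_bounds by force
    then show ?thesis using mu_b[of n] by (simp add: abs_mult mult_le_one)
  qed
  have up: "(\<Sum>n\<in>B'. mu n * r n) \<le> real (card B')"
  proof -
    have "(\<Sum>n\<in>B'. mu n * r n) \<le> (\<Sum>n\<in>B'. 1)"
      using term_b by (intro sum_mono) (auto simp: abs_le_iff)
    then show ?thesis by simp
  qed
  have lo: "(\<Sum>n\<in>B'. mu n * r n) \<ge> - real (card B')"
  proof -
    have "(\<Sum>n\<in>B'. mu n * r n) \<ge> (\<Sum>n\<in>B'. -1)"
      using term_b by (intro sum_mono) (auto simp: abs_le_iff)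
    then show ?thesis by simp
  qed
  have r1: "r 1 = x - real N" unfolding r_def by simp
  have disj: "card B' + A \<le> N"
  proof -
    have "B' \<inter> {m\<in>{1..N}. prime_factors m \<inter> P = {}} = {}"
    proof (rule ccontr)
      assume "B' \<inter> {m\<in>{1..N}. prime_factors m \<inter> P = {}} \<noteq> {}"
      then obtain m where m: "m \<in> B'" "prime_factors m \<inter> P = {}" by auto
      then have "prime_factors m \<subseteq> P" "m \<noteq> 1" "m > 0" unfolding B'_def B_def by auto
      then have pe: "prime_factors m = {}" using m by auto
      obtain p where p: "prime p" "p dvd m" using prime_factor_nat[OF \<open>m \<noteq> 1\<close>] by blast
      then have "p \<in> prime_factors m" using \<open>m > 0\<close> by (simp add: prime_factors_dvd)
      then show False using pe by simp
    qed
    then have "card (B' \<union> {m\<in>{1..N}. prime_factors m \<inter> P = {}}) = card B' + A"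
      unfolding A_def using fB' by (intro card_Un_disjoint) auto
    moreover have "card (B' \<union> {m\<in>{1..N}. prime_factors m \<inter> P = {}}) \<le> card {1..N}"
      unfolding B'_def B_def by (intro card_mono) auto
    ultimately show ?thesis by simp
  qed
  have cB': "card B' \<le> N" using disj by simp
  have U: "x * (\<Sum>n\<in>B. mu n / real n) \<le> x"
  proof -
    have "real (card B') + real A \<le> real N" using disj by linarith
    then show ?thesis using main up r1 by linarith
  qed
  have L: "x * (\<Sum>n\<in>B. mu n / real n) \<ge> - x"
  proof -
    have "real (card B') \<le> real N" using cB' by simp
    then show ?thesis using main lo r1 Nx by linarith
  qed
  have "\<bar>\<Sum>n\<in>B. mu n / real n\<bar> \<le> 1"
  proof -
    have "\<bar>x * (\<Sum>n\<in>B. mu n / real n)\<bar> \<le> x * 1" using U L by auto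
    then show ?thesis using x1 by (simp add: abs_mult)
  qed
  then show ?thesis using Beq unfolding mu_def by simp
qed

end
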